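(* Let $q=2$ and let $d,e$ be integers with $d\ge1$ and $e\ge d+1$. For all $0\le i\le d-1$ and $1\le j\le d$, $$|B_j(i)|>|B_j(i+1)|.$$
   Context: With $q=2$: for integers $m\ge 0$ and $l$, ${m\brack l}=\prod_{t=1}^{l}\frac{q^{m-t+1}-1}{q^t-1}$ for $l\ge0$ and $0$ for $l<0$. For $0\le i,j\le d$, $$B_j(i)=\sum_{h=0}^{\min\{j,d-i\}}(-1)^{j-h}q^{eh+\binom{j-h}{2}}{d-h\brack d-j}{d-i\brack h};$$ these are the eigenvalues of the bilinear forms graph $H_q(d,e,j)$ (vertices: $d\times e$ matrices over $\mathbb F_q$, adjacent iff their difference has rank $j$). *)

theory Defs
  imports Complex_Main
begin

text \<open>Gaussian binomial coefficient [m, l] with q = 2, for m \<ge> 0 and integer l,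
  by the product formula; zero for l < 0.  (Within the definition of B below
  only arguments with 0 \<le> l \<le> m occur, so truncated subtraction m - t + 1
  is harmless there.)\<close>
definition gbin :: "nat \<Rightarrow> int \<Rightarrow> real" where
  "gbin m l = (if l < 0 then 0 else
      (\<Prod>t\<in>{1..nat l}. (2 ^ (m - t + 1) - 1) / (2 ^ t - 1)))"

text \<open>Eigenvalues B_j(i) of the bilinear forms graph H_2(d,e,j).\<close>
definition B :: "nat \<Rightarrow> nat \<Rightarrow> nat \<Rightarrow> nat \<Rightarrow> real" where
  "B d e j i = (\<Sum>h=0..min j (d - i).
      (-1) ^ (j - h) * 2 ^ (e * h + ((j - h) choose 2))
      * gbin (d - h) (int d - int j) * gbin (d - i) (int h))"

end

theory Submission
  imports Defs
begin

declare of_nat_Suc[simp del]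

lemma gbin_0[simp]: "gbin m 0 = 1"
  by (simp add: gbin_def)

lemma gbin_Suc: "gbin m (int (Suc l)) = gbin m (int l) * (2^(m - Suc l + 1) - 1) / (2^(Suc l) - 1)"
proof -
  have "{1..Suc l} = insert (Suc l) {1..l}" by auto
  then show ?thesis unfolding gbin_def by (simp del: of_nat_Suc)
qed

lemma pow2m1_pos: "n > 0 \<Longrightarrow> (2::real)^n - 1 > 0"
  using one_less_power[of "2::real" n] by simp

lemma gbin_pos: "l \<le> m \<Longrightarrow> gbin m (int l) > 0"
proof (induction l)
  case 0 then show ?case by simp
next
  case (Suc l)
  have a: "(2::real)^(m - Suc l + 1) - 1 > 0"
    by (rule pow2m1_pos) simp
  have b: "(2::real)^(Suc l) - 1 > 0"
    by (rule pow2m1_pos) simp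
  show ?case using Suc a b by (simp add: gbin_Suc)
qed

lemma gbin_ratio: "l \<le> m \<Longrightarrow> gbin (Suc m) (int l) * (2^(Suc m - l) - 1) = gbin m (int l) * (2^(Suc m) - 1)"
proof (induction l)
  case 0 then show ?case by simp
next
  case (Suc l)
  have e1: "Suc m - Suc l + 1 = Suc m - l" using Suc.prems by simp
  have e2: "m - Suc l + 1 = Suc m - Suc l" using Suc.prems by simp
  have IH: "gbin (Suc m) (int l) * (2^(Suc m - l) - 1) = gbin m (int l) * (2^(Suc m) - 1)"
    using Suc by simp
  have "gbin (Suc m) (int (Suc l)) * (2^(Suc m - Suc l) - 1)
      = (gbin (Suc m) (int l) * (2^(Suc m - l) - 1)) * (2^(Suc m - Suc l) - 1) / (2^(Suc l) - 1)"
    using Suc.prems by (simp add: gbin_Suc e1 Suc_diff_le)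
  also have "\<dots> = gbin m (int l) * (2^(Suc m) - 1) * (2^(Suc m - Suc l) - 1) / (2^(Suc l) - 1)"
    by (simp add: IH)
  also have "\<dots> = gbin m (int (Suc l)) * (2^(Suc m) - 1)"
    using Suc.prems by (simp add: gbin_Suc e2 Suc_diff_Suc)
  finally show ?case .
qed

definition gz :: "nat \<Rightarrow> nat \<Rightarrow> real" where
  "gz m h = (if h \<le> m then gbin m (int h) else 0)"

lemma gz_Suc_alt: "h \<le> m \<Longrightarrow> gz m (Suc h) = gbin m (int h) * (2^(m-h) - 1) / (2^(Suc h) - 1)"
proof (cases "h = m")
  case True then show ?thesis by (simp add: gz_def)
next
  case False
  assume "h \<le> m"
  with False have "Suc h \<le> m" "m - Suc h + 1 = m - h" by auto
  then show ?thesis by (simp add: gz_def gbin_Suc)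
qed

lemma gz_pascal: "gz (Suc m) (Suc h) = gz m (Suc h) + 2^(m-h) * gz m h"
proof (cases "h \<le> m")
  case False then show ?thesis by (simp add: gz_def)
next
  case True
  have D: "(2::real)^(Suc h) - 1 > 0"
    by (rule pow2m1_pos) simp
  have e1: "Suc m - Suc h + 1 = Suc m - h" using True by simp
  have r: "gbin (Suc m) (int h) * (2^(Suc m - h) - 1) = gbin m (int h) * (2^(Suc m) - 1)"
    using gbin_ratio[OF True] .
  have "gz (Suc m) (Suc h) = gbin (Suc m) (int h) * (2^(Suc m - h) - 1) / (2^(Suc h) - 1)"
    using True by (simp add: gz_def gbin_Suc e1 Suc_diff_le)
  also have "\<dots> = gbin m (int h) * (2^(Suc m) - 1) / (2^(Suc h) - 1)" by (simp add: r)
  also have "\<dots> = gbin m (int h) * (2^(m-h) - 1) / (2^(Suc h) - 1) + 2^(m-h) * gbin m (int h)"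
  proof -
    have "(m-h) + Suc h = Suc m" using True by simp
    then have p: "(2::real)^(Suc m) = 2^(m-h) * 2^(Suc h)"
      by (metis power_add)
    have "h + (m-h) = m" using True by simp
    then have p2: "(2::real)^m = 2^h * 2^(m-h)"
      by (metis power_add)
    show ?thesis using D by (simp add: field_simps p p2)
  qed
  also have "\<dots> = gz m (Suc h) + 2^(m-h) * gz m h"
    using True by (simp only: gz_Suc_alt[OF True]) (simp add: gz_def)
  finally show ?thesis .
qed

lemma sum_pascal:
  "(\<Sum>h=0..j. f h * gz (Suc c) h) = (\<Sum>h=0..j. f h * gz c h) + (\<Sum>h<j. f (Suc h) * 2^(c-h) * gz c h)"
proof (induction j)
  case 0 then show ?case by (simp add: gz_def)
next
  case (Suc j)
  then show ?case by (simp add: gz_pascal algebra_simps)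
qed


definition aa :: "nat \<Rightarrow> nat \<Rightarrow> nat \<Rightarrow> nat \<Rightarrow> real" where
  "aa d e j h = (-1) ^ (j - h) * 2 ^ (e * h + ((j - h) choose 2)) * gbin (d - h) (int d - int j)"

lemma B_gz: "B d e j i = (\<Sum>h=0..j. aa d e j h * gz (d-i) h)"
proof -
  have "B d e j i = (\<Sum>h=0..min j (d-i). aa d e j h * gbin (d-i) (int h))"
    unfolding B_def aa_def by simp
  also have "\<dots> = (\<Sum>h=0..min j (d-i). aa d e j h * gz (d-i) h)"
    by (rule sum.cong) (auto simp: gz_def)
  also have "\<dots> = (\<Sum>h=0..j. aa d e j h * gz (d-i) h)"
    by (rule sum.mono_neutral_left) (auto simp: gz_def)
  finally show ?thesis .
qed

lemma B_rec:
  assumes "i < d" "1 \<le> j" "1 \<le> e"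
  shows "B d e j i - B d e j (Suc i) = 2^(e+d-i-1) * B (d-1) (e-1) (j-1) i"
proof -
  obtain c where c: "d - i = Suc c" using assms(1) by (metis Suc_diff_Suc)
  have c2: "d - Suc i = c" "d - 1 - i = c" using c by auto
  obtain e' where e': "e = Suc e'" using assms(3) by (metis Suc_le_D One_nat_def)
  have "B d e j i - B d e j (Suc i) = (\<Sum>h<j. aa d e j (Suc h) * 2^(c-h) * gz c h)"
    unfolding B_gz c c2 sum_pascal by simp
  also have "\<dots> = (\<Sum>h<j. 2^(e+d-i-1) * (aa (d-1) (e-1) (j-1) h * gz c h))"
  proof (rule sum.cong[OF refl])
    fix h assume h: "h \<in> {..<j}"
    show "aa d e j (Suc h) * 2^(c-h) * gz c h = 2^(e+d-i-1) * (aa (d-1) (e-1) (j-1) h * gz c h)"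
    proof (cases "h \<le> c")
      case False then show ?thesis by (simp add: gz_def)
    next
      case True
      have s1: "j - Suc h = j - 1 - h" by simp
      have s2: "d - Suc h = d - 1 - h" by simp
      have s3: "int (d-1) - int (j-1) = int d - int j" using assms by auto
      have ex: "e * Suc h + ((j - 1 - h) choose 2) + (c - h) = (e+d-i-1) + ((e-1)*h + ((j - 1 - h) choose 2))"
        using True c e' by (simp add: algebra_simps)
      have pw: "(2::real)^(e * Suc h + ((j - 1 - h) choose 2)) * 2^(c-h) = 2^(e+d-i-1) * 2^((e-1)*h + ((j - 1 - h) choose 2))"
        by (metis ex power_add)
      show ?thesis unfolding aa_def s1 s2 s3
        using pw by (simp add: algebra_simps)
    qed
  qed
  also have "\<dots> = 2^(e+d-i-1) * B (d-1) (e-1) (j-1) i"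
  proof -
    have "{0..j-1} = {..<j}" using assms(2) by auto
    then show ?thesis unfolding B_gz[of "d-1"] c2 by (simp add: sum_distrib_left)
  qed
  finally show ?thesis .
qed


lemma gbin_diag: "gbin m (int m) = 1"
proof (induction m)
  case 0 then show ?case by simp
next
  case (Suc m)
  have r: "gbin (Suc m) (int m) * (2^(Suc m - m) - 1) = gbin m (int m) * (2^(Suc m) - 1)"
    by (rule gbin_ratio) simp
  have D: "(2::real)^(Suc m) - 1 > 0" by (rule pow2m1_pos) simp
  have "gbin (Suc m) (int (Suc m)) = gbin (Suc m) (int m) / (2^(Suc m) - 1)"
    by (simp add: gbin_Suc)
  also have "\<dots> = 1" using r Suc D by simp
  finally show ?case .
qed

lemma B_j0: "i \<le> d \<Longrightarrow> B d e 0 i = 1"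
  unfolding B_def by (simp add: gbin_diag binomial_eq_0)

lemma B_id: "B d e j d = (-1)^j * 2^(j choose 2) * gbin d (int d - int j)"
  unfolding B_def by simp

lemma edge_bound:
  assumes "1 \<le> j" "j \<le> d" "e \<ge> d + 1"
  shows "2^(j choose 2) * gbin d (int d - int j) < 2^(e-1) * (2^((j-1) choose 2) * gbin (d-1) (int (d-1) - int (j-1)))"
proof -
  obtain j' where j': "j = Suc j'" using assms(1) by (metis Suc_le_D One_nat_def)
  obtain n where n: "d = Suc n" using assms by (metis Suc_le_D le_trans One_nat_def)
  define l where "l = d - j"
  have l: "int d - int j = int l" "int (d-1) - int (j-1) = int l" "l \<le> n" "Suc n - l = j"
    using assms j' n unfolding l_def by auto
  have ch: "j choose 2 = j' + (j' choose 2)" unfolding j'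
    by (simp add: numeral_2_eq_2)
  define G where "G = gbin d (int l)"
  define G' where "G' = gbin n (int l)"
  have G'pos: "G' > 0" unfolding G'_def using l by (simp add: gbin_pos)
  have r: "G * (2^j - 1) = G' * (2^d - 1)"
    unfolding G_def G'_def n using gbin_ratio[OF l(3)] l(4) by simp
  have Dj: "(2::real)^j - 1 > 0" by (rule pow2m1_pos) (use assms in auto)
  have A: "(2::real)^j' \<le> 2^j - 1" unfolding j' by simp
  have B: "(2::real)^d \<le> 2^(e-1)" by (rule power_increasing) (use assms in auto)
  have "2^j' * G * (2^j - 1) = 2^j' * (G' * (2^d - 1))" using r by simp
  also have "\<dots> < 2^j' * (G' * 2^d)" using G'pos by simp
  also have "\<dots> \<le> 2^j' * (G' * 2^(e-1))" using G'pos B by simp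
  also have "\<dots> \<le> (2^j - 1) * (G' * 2^(e-1))"
    by (rule mult_right_mono[OF A]) (use G'pos in simp)
  finally have "2^j' * G < G' * 2^(e-1)" using Dj
    by (metis mult.commute mult_less_cancel_left_pos)
  moreover have "j - 1 = j'" "d - 1 = n" using j' n by auto
  moreover have "int n - int j' = int l" using j' n l_def assms by auto
  ultimately show ?thesis unfolding ch
    by (simp only: l(1,2) G_def[symmetric] G'_def[symmetric] \<open>j - 1 = j'\<close> \<open>d - 1 = n\<close>)
       (use \<open>int n - int j' = int l\<close> in \<open>simp add: power_add algebra_simps G'_def\<close>)
qed


lemma m1sq: "(-1::real)^k * ((-1)^k * x) = x"
  by (induction k) auto

lemma m1abs: "\<bar>(-1::real)^k * x\<bar> = \<bar>x\<bar>"
  by (simp add: abs_mult)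

definition TT :: "nat \<Rightarrow> nat \<Rightarrow> nat \<Rightarrow> nat \<Rightarrow> real" where
  "TT d e j i = (-1)^(i + j - d) * B d e j i"

lemma inner:
  fixes n e j i :: nat
  assumes e: "e \<ge> n + 2" and j: "1 \<le> j" "j \<le> Suc n"
    and IH1: "\<And>j i. j \<le> n \<Longrightarrow> i \<le> n \<Longrightarrow> (0::real) < TT n (e-1) j i"
    and IH2: "\<And>j i. 1 \<le> j \<Longrightarrow> j \<le> n \<Longrightarrow> i < n \<Longrightarrow> \<bar>B n (e-1) j (Suc i)\<bar> < \<bar>B n (e-1) j i\<bar>"
    and i: "i \<le> Suc n"
  shows "\<forall>i'. i \<le> i' \<longrightarrow> i' \<le> Suc n \<longrightarrow> 0 < TT (Suc n) e j i' \<and> (i' < Suc n \<longrightarrow> TT (Suc n) e j (Suc i') < TT (Suc n) e j i')"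
  using i
proof (induction i rule: inc_induct)
  case base
  have "TT (Suc n) e j (Suc n) = 2^(j choose 2) * gbin (Suc n) (int (Suc n) - int j)"
    unfolding TT_def B_id by (simp add: m1sq)
  also have "\<dots> > 0"
  proof -
    have eq: "int (Suc n) - int j = int (Suc n - j)" using j by (simp add: of_nat_diff)
    have g: "gbin (Suc n) (int (Suc n - j)) > 0" by (rule gbin_pos) simp
    have "(0::real) < 2^(j choose 2)" by simp
    from mult_pos_pos[OF this g] show ?thesis unfolding eq .
  qed
  finally have pos: "TT (Suc n) e j (Suc n) > 0" .
  show ?case
  proof (intro allI impI)
    fix i' assume "Suc n \<le> i'" "i' \<le> Suc n"
    then have "i' = Suc n" by simp
    then show "0 < TT (Suc n) e j i' \<and> (i' < Suc n \<longrightarrow> TT (Suc n) e j (Suc i') < TT (Suc n) e j i')"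
      using pos by simp
  qed
next
  case (step m)
  define T where "T = TT (Suc n) e j"
  have Tm1: "T (Suc m) > 0" using step unfolding T_def by auto
  have ms: "m \<le> n" using step by auto
  have "T m > 0 \<and> T (Suc m) < T m"
  proof -
    define p where "p = e + n - m - 1"
    have pe: "e + Suc n - m - 1 = Suc p" "e + Suc n - Suc m - 1 = p" using e ms unfolding p_def by auto
    have rec: "B (Suc n) e j m - B (Suc n) e j (Suc m) = 2^(Suc p) * B n (e-1) (j-1) m"
      using B_rec[of m "Suc n" j e] j e ms pe by simp
    define T' where "T' = TT n (e-1) (j-1)"
    have T'p: "T' m > 0" unfolding T'_def using IH1 j ms by simp
    show ?thesis
    proof (cases "m + j \<le> n")
      case True
      have x: "m + j - Suc n = 0" "Suc m + j - Suc n = 0" "m + (j-1) - n = 0" using True by auto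
      have "T m = T (Suc m) + 2^(Suc p) * T' m"
        using rec unfolding T_def T'_def TT_def x by simp
      moreover have "2^(Suc p) * T' m > 0" using T'p by simp
      ultimately show ?thesis using Tm1 by linarith
    next
      case False
      define k where "k = m + j - Suc n"
      have x: "m + j - Suc n = k" "Suc m + j - Suc n = Suc k" "m + (j-1) - n = k"
        using False j unfolding k_def by auto
      have Tsm: "T (Suc m) = - ((-1)^k * B (Suc n) e j (Suc m))"
        unfolding T_def TT_def x by simp
      have Tm: "T m = (-1)^k * B (Suc n) e j m" unfolding T_def TT_def x by simp
      have T'm: "T' m = (-1)^k * B n (e-1) (j-1) m" unfolding T'_def TT_def x by simp
      have eq: "T m = - T (Suc m) + 2 * 2^p * T' m"
        unfolding Tm Tsm T'm using rec by (simp add: algebra_simps)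
      have bound: "T (Suc m) < 2^p * T' m"
      proof (cases "m = n")
        case True
        have k: "k = j - 1" using x True j by auto
        have "T (Suc m) = 2^(j choose 2) * gbin (Suc n) (int (Suc n) - int j)"
          unfolding T_def TT_def True B_id by (simp add: m1sq)
        moreover have "T' m = 2^((j-1) choose 2) * gbin n (int n - int (j-1))"
          unfolding T'_def TT_def True B_id by (simp add: m1sq)
        moreover have "p = e - 1" using True p_def by simp
        ultimately show ?thesis using edge_bound[of j "Suc n" e] j e by simp
      next
        case False
        have mn: "m < n" using False ms by simp
        have rec2: "B (Suc n) e j (Suc m) - B (Suc n) e j (Suc (Suc m)) = 2^p * B n (e-1) (j-1) (Suc m)"
        proof -
          have pe2: "e + n - Suc m = p" unfolding p_def by simp
          show ?thesis using B_rec[of "Suc m" "Suc n" j e] j e mn pe2 by simp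
        qed
        have y: "Suc (Suc m) + j - Suc n = Suc (Suc k)" "Suc m + (j-1) - n = Suc k"
          using x j by auto
        have Tssm: "T (Suc (Suc m)) > 0" using step mn unfolding T_def by auto
        have Tssm': "T (Suc (Suc m)) = (-1)^k * B (Suc n) e j (Suc (Suc m))"
          unfolding T_def TT_def y by simp
        have T'sm: "T' (Suc m) = - ((-1)^k * B n (e-1) (j-1) (Suc m))"
          unfolding T'_def TT_def y by simp
        have eq2: "T (Suc m) = - T (Suc (Suc m)) + 2^p * T' (Suc m)"
          unfolding Tsm Tssm' T'sm using rec2 by (simp add: algebra_simps)
        have j2: "1 \<le> j - 1" using x j mn \<open>\<not> m + j \<le> n\<close> by auto
        have "\<bar>B n (e-1) (j-1) (Suc m)\<bar> < \<bar>B n (e-1) (j-1) m\<bar>"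
          using IH2[OF j2 _ mn] j by auto
        moreover have "\<bar>B n (e-1) (j-1) (Suc m)\<bar> = T' (Suc m)"
        proof -
          have "T' (Suc m) > 0" unfolding T'_def using IH1 j mn by simp
          then show ?thesis using m1abs[of k "B n (e-1) (j-1) (Suc m)"] T'sm by simp
        qed
        moreover have "\<bar>B n (e-1) (j-1) m\<bar> = T' m"
          using m1abs[of k "B n (e-1) (j-1) m"] T'm T'p by simp
        ultimately have "T' (Suc m) < T' m" by simp
        then have "2^p * T' (Suc m) < 2^p * T' m" by simp
        then show ?thesis using eq2 Tssm by linarith
      qed
      show ?thesis using eq bound Tm1 by simp
    qed
  qed
  then have Tm: "T m > 0 \<and> T (Suc m) < T m" .
  show ?case
  proof (intro allI impI)
    fix i' assume a: "m \<le> i'" "i' \<le> Suc n"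
    show "0 < TT (Suc n) e j i' \<and> (i' < Suc n \<longrightarrow> TT (Suc n) e j (Suc i') < TT (Suc n) e j i')"
    proof (cases "i' = m")
      case True then show ?thesis using Tm unfolding T_def by simp
    next
      case False then have "Suc m \<le> i'" using a by simp
      then show ?thesis using step.IH a(2) by blast
    qed
  qed
qed


lemma main:
  "e \<ge> d + 1 \<Longrightarrow> (\<forall>j i. j \<le> d \<longrightarrow> i \<le> d \<longrightarrow> 0 < TT d e j i) \<and>
     (\<forall>j i. 1 \<le> j \<longrightarrow> j \<le> d \<longrightarrow> i < d \<longrightarrow> \<bar>B d e j (Suc i)\<bar> < \<bar>B d e j i\<bar>)"
proof (induction d arbitrary: e)
  case 0
  then show ?case by (simp add: TT_def B_j0)
next
  case (Suc n)
  have e1: "e - 1 \<ge> n + 1" "e \<ge> n + 2" using Suc.prems by auto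
  note IH = Suc.IH[OF e1(1)]
  have IH1: "\<And>j i. j \<le> n \<Longrightarrow> i \<le> n \<Longrightarrow> (0::real) < TT n (e-1) j i" using IH by blast
  have IH2: "\<And>j i. 1 \<le> j \<Longrightarrow> j \<le> n \<Longrightarrow> i < n \<Longrightarrow> \<bar>B n (e-1) j (Suc i)\<bar> < \<bar>B n (e-1) j i\<bar>"
    using IH by blast
  have K: "\<And>j i. 1 \<le> j \<Longrightarrow> j \<le> Suc n \<Longrightarrow> i \<le> Suc n \<Longrightarrow>
      0 < TT (Suc n) e j i \<and> (i < Suc n \<longrightarrow> TT (Suc n) e j (Suc i) < TT (Suc n) e j i)"
  proof -
    fix j i assume a: "1 \<le> j" "j \<le> Suc n" "i \<le> Suc n"
    have "\<forall>i'. 0 \<le> i' \<longrightarrow> i' \<le> Suc n \<longrightarrow> 0 < TT (Suc n) e j i' \<and> (i' < Suc n \<longrightarrow> TT (Suc n) e j (Suc i') < TT (Suc n) e j i')"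
      by (rule inner[OF e1(2) a(1,2) IH1 IH2]) auto
    then show "0 < TT (Suc n) e j i \<and> (i < Suc n \<longrightarrow> TT (Suc n) e j (Suc i) < TT (Suc n) e j i)"
      using a(3) by blast
  qed
  have P1: "\<forall>j i. j \<le> Suc n \<longrightarrow> i \<le> Suc n \<longrightarrow> 0 < TT (Suc n) e j i"
  proof (intro allI impI)
    fix j i assume a: "j \<le> Suc n" "i \<le> Suc n"
    show "0 < TT (Suc n) e j i"
    proof (cases "j = 0")
      case True then show ?thesis using a by (simp add: TT_def B_j0)
    next
      case False then show ?thesis using K[of j i] a by simp
    qed
  qed
  have P2: "\<forall>j i. 1 \<le> j \<longrightarrow> j \<le> Suc n \<longrightarrow> i < Suc n \<longrightarrow> \<bar>B (Suc n) e j (Suc i)\<bar> < \<bar>B (Suc n) e j i\<bar>"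
  proof (intro allI impI)
    fix j i assume a: "1 \<le> j" "j \<le> Suc n" "i < Suc n"
    have k1: "0 < TT (Suc n) e j i \<and> TT (Suc n) e j (Suc i) < TT (Suc n) e j i"
      using K[of j i] a by simp
    have k2: "0 < TT (Suc n) e j (Suc i)" using K[of j "Suc i"] a by simp
    have "\<bar>B (Suc n) e j i\<bar> = TT (Suc n) e j i"
      using k1 m1abs[of "i + j - Suc n" "B (Suc n) e j i"] unfolding TT_def by simp
    moreover have "\<bar>B (Suc n) e j (Suc i)\<bar> = TT (Suc n) e j (Suc i)"
      using k2 m1abs[of "Suc i + j - Suc n" "B (Suc n) e j (Suc i)"] unfolding TT_def by simp
    ultimately show "\<bar>B (Suc n) e j (Suc i)\<bar> < \<bar>B (Suc n) e j i\<bar>" using k1 by simp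
  qed
  show ?case using P1 P2 by blast
qed

theorem theorem4p6:
  fixes d e i j :: nat
  assumes "d \<ge> 1" and "e \<ge> d + 1" and "i \<le> d - 1" and "1 \<le> j" and "j \<le> d"
  shows "\<bar>B d e j i\<bar> > \<bar>B d e j (i + 1)\<bar>"
proof -
  have "i < d" using assms by auto
  then show ?thesis using main[OF assms(2)] assms by simp
qed

end
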